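(* Let $b$ and $n\ge 2$ be positive integers and let $h(x)=h_{n-2}x^{n-2}+\cdots+h_1x+h_0$ be a polynomial with complex coefficients of degree at most $n-2$. Define the numbers $h_i'$ ($i\ge 0$) by \[ \Phi_b\left(\frac{h(x)}{(1-x)^n}\right)=\frac{\sum_{i\ge 0}h_i' x^i}{(1-x)^n}. \] Then for every $i\ge 0$, \[ h_i' = b^{n-1}\sum_{j=0}^{n-2} K_b(j,i)\,h_j, \] where $K_b$ is the transition matrix of the base $b$ carries chain for the addition of $n-1$ numbers.
   Context: Let $\mathcal{R}$ be the space of rational functions in $x$ with complex coefficients. Every $R\in\mathcal{R}$ has a Laurent expansion at $x=0$, $R(x)=\sum_{n\gg-\infty} a_n x^n$ (only finitely many nonzero coefficients with negative index). For a positive integer $b$, the map $\Phi_b:\mathcal{R}\to\mathcal{R}$ is defined by $\Phi_b(R(x))=\sum_{n\gg -\infty} a_{bn+(b-1)}x^n$. The base $b$ carries chain for the addition of $m$ numbers: when $m$ numbers are added in base $b$ with all digits chosen independently and uniformly from $\{0,1,\dots,b-1\}$, the successive carries (working from the right, starting from carry $0$) form a Markov chain; if the current carry is $c$ and the digits in the next column are $y_1,\dots,y_m$, the next carry is $\lfloor (c+y_1+\cdots+y_m)/b\rfloor$. Its transition matrix is \[ K_b(c,d)=\frac{1}{b^m}\,\#\{(y_1,\dots,y_m)\in\{0,\dots,b-1\}^m : \lfloor (c+y_1+\cdots+y_m)/b\rfloor = d\} \] for nonnegative integers $c,d$ (here $m=n-1$, and for carries $c\le n-2$ one has $K_b(c,d)=0$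 whenever $d\ge n-1$). *)

theory Defs
  imports "HOL-Computational_Algebra.Computational_Algebra"
begin

text \<open>The operator Phi_b acting on (the expansion at 0 of) a rational function that is
  regular at 0, i.e. a formal power series: the coefficient of x^n in the result is the
  coefficient of x^(b n + (b-1)) in the input.  (Indices b n + b - 1 with n < 0 are
  negative, where the expansion has zero coefficients, so the result is again a power series.)\<close>
definition Phi :: "nat \<Rightarrow> 'a fps \<Rightarrow> 'a fps" where
  "Phi b f = Abs_fps (\<lambda>k. fps_nth f (b * k + (b - 1)))"

definition carries_K :: "nat \<Rightarrow> nat \<Rightarrow> nat \<Rightarrow> nat \<Rightarrow> real" where
  "carries_K b m c d =
     real (card {y \<in> PiE {..<m} (\<lambda>_. {..<b}). (c + (\<Sum>i<m. y i)) div b = d}) / real b ^ m"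

end

theory Submission
  imports Defs
begin

lemma phi_key:
  fixes f g G :: "'a::comm_ring_1 fps"
  assumes b: "b \<ge> 1" and G: "\<And>k. G $ k = (if b dvd k then g $ (k div b) else 0)"
  shows "Phi b (f * G) = Phi b f * g"
proof (rule fps_ext)
  fix i
  let ?N = "b * i + (b - 1)"
  have "Phi b (f * G) $ i = (G * f) $ ?N" by (simp add: Phi_def mult.commute)
  also have "\<dots> = (\<Sum>k=0..?N. if b dvd k then g $ (k div b) * f $ (?N - k) else 0)"
    by (auto simp: fps_mult_nth G intro!: sum.cong)
  also have "\<dots> = (\<Sum>k\<in>{k\<in>{0..?N}. b dvd k}. g $ (k div b) * f $ (?N - k))"
    by (subst sum.inter_filter) auto
  also have "{k\<in>{0..?N}. b dvd k} = (\<lambda>l. b * l) ` {0..i}"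
  proof (safe)
    fix k assume k: "k \<in> {0..?N}" "b dvd k"
    then obtain l where l: "k = b * l" by auto
    have "l \<le> i"
    proof (rule ccontr)
      assume "\<not> l \<le> i" then have "Suc i \<le> l" by simp
      then have "b * Suc i \<le> b * l" by (rule mult_le_mono2)
      then show False using k l b by simp
    qed
    then show "k \<in> (\<lambda>l. b * l) ` {0..i}" using l by auto
  next
    fix l assume "l \<in> {0..i}"
    then have "b * l \<le> b * i" by (simp add: mult_le_mono2)
    then show "b * l \<in> {0..?N}" by (simp only: atLeastAtMost_iff) linarith
  qed auto
  also have "(\<Sum>k\<in>(\<lambda>l. b * l) ` {0..i}. g $ (k div b) * f $ (?N - k))
      = (\<Sum>l=0..i. g $ l * f $ (?N - b * l))"
    using b by (subst sum.reindex) (auto simp: inj_on_def)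
  also have "\<dots> = (\<Sum>l=0..i. g $ l * Phi b f $ (i - l))"
  proof (rule sum.cong)
    fix l assume "l \<in> {0..i}"
    then have "?N - b * l = b * (i - l) + (b - 1)"
      by (simp add: diff_mult_distrib2)
    then show "g $ l * f $ (?N - b * l) = g $ l * Phi b f $ (i - l)" by (simp add: Phi_def)
  qed simp
  also have "\<dots> = (Phi b f * g) $ i" by (simp add: fps_mult_nth mult.commute)
  finally show "Phi b (f * G) $ i = (Phi b f * g) $ i" .
qed

lemma compose_Xpow_nth:
  fixes g :: "'a::comm_ring_1 fps"
  assumes b: "b \<ge> 1"
  shows "(g oo fps_X ^ b) $ k = (if b dvd k then g $ (k div b) else 0)"
proof -
  have "(g oo fps_X ^ b) $ k = (\<Sum>i=0..k. g $ i * (if k = b * i then 1 else 0))"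
    by (simp add: fps_compose_nth power_mult[symmetric])
  also have "\<dots> = (\<Sum>i\<in>{0..k}. if i = k div b \<and> b dvd k then g $ i else 0)"
    using b by (intro sum.cong) auto
  also have "\<dots> = (if b dvd k then g $ (k div b) else 0)"
    by (cases "b dvd k") (auto simp: div_le_dividend)
  finally show ?thesis .
qed

definition PP :: "nat \<Rightarrow> 'a::comm_ring_1 fps" where
  "PP b = (\<Sum>d<b. fps_X ^ d)"

lemma PP_tele: "(1 - fps_X) * PP b = 1 - fps_X ^ b"
proof (induction b)
  case (Suc b)
  have "PP (Suc b) = PP b + (fps_X ^ b :: 'a fps)" by (simp add: PP_def)
  then have "(1 - fps_X) * PP (Suc b) = (1 - fps_X) * PP b + (1 - fps_X) * (fps_X ^ b :: 'a fps)"
    by (simp add: algebra_simps)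
  also have "\<dots> = 1 - fps_X ^ Suc b" using Suc by (simp add: algebra_simps)
  finally show ?case .
qed (simp add: PP_def)

lemma PP_nth: "PP b $ k = (if k < b then 1 else 0)"
  by (simp add: PP_def fps_sum_nth)

lemma PP_pow_Suc_nth: "(PP b ^ Suc m :: 'a::comm_ring_1 fps) $ s
   = (\<Sum>d<b. if d \<le> s then (PP b ^ m) $ (s - d) else 0)"
proof -
  have "(PP b ^ Suc m :: 'a fps) $ s = (\<Sum>d=0..s. PP b $ d * (PP b ^ m) $ (s - d))"
    by (simp add: fps_mult_nth)
  also have "\<dots> = (\<Sum>d\<in>{0..s}. if d < b then (PP b ^ m :: 'a fps) $ (s - d) else 0)"
    by (auto simp: PP_nth intro!: sum.cong)
  also have "\<dots> = (\<Sum>d\<in>{0..s} \<inter> {..<b}. (PP b ^ m :: 'a fps) $ (s - d))"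
    by (subst sum.inter_restrict) auto
  also have "\<dots> = (\<Sum>d<b. if d \<le> s then (PP b ^ m) $ (s - d) else 0)"
    by (subst Int_commute, subst sum.inter_restrict) (auto intro!: sum.cong)
  finally show ?thesis .
qed

definition SS :: "nat \<Rightarrow> nat \<Rightarrow> nat \<Rightarrow> (nat \<Rightarrow> nat) set" where
  "SS b m s = {y \<in> PiE {..<m} (\<lambda>_. {..<b}). (\<Sum>i<m. y i) = s}"

lemma SS_finite: "finite (SS b m s)"
  unfolding SS_def by (rule finite_subset[of _ "PiE {..<m} (\<lambda>_. {..<b})"]) (auto intro: finite_PiE)

lemma SS_slice:
  assumes d: "d < b"
  shows "card {y \<in> SS b (Suc m) s. y m = d} = (if d \<le> s then card (SS b m (s - d)) else 0)"
proof (cases "d \<le> s")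
  case True
  have "bij_betw (\<lambda>y. restrict y {..<m}) {y \<in> SS b (Suc m) s. y m = d} (SS b m (s - d))"
  proof (rule bij_betw_byWitness[where f' = "\<lambda>z. z(m := d)"])
    show "\<forall>a\<in>{y \<in> SS b (Suc m) s. y m = d}. (restrict a {..<m})(m := d) = a"
      by (auto simp: SS_def PiE_def extensional_def fun_eq_iff)
    show "\<forall>a'\<in>SS b m (s - d). restrict (a'(m := d)) {..<m} = a'"
      by (auto simp: SS_def PiE_def extensional_def fun_eq_iff)
    show "(\<lambda>y. restrict y {..<m}) ` {y \<in> SS b (Suc m) s. y m = d} \<subseteq> SS b m (s - d)"
      by (auto simp: SS_def PiE_def extensional_def)
    have "\<And>z. z \<in> SS b m (s - d) \<Longrightarrow> z(m := d) \<in> SS b (Suc m) s \<and> (z(m := d)) m = d"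
    proof -
      fix z assume z: "z \<in> SS b m (s - d)"
      have "(\<Sum>i<Suc m. (z(m := d)) i) = (\<Sum>i<m. z i) + d" by simp
      then show "z(m := d) \<in> SS b (Suc m) s \<and> (z(m := d)) m = d"
        using z True d by (auto simp: SS_def PiE_def extensional_def Pi_def less_Suc_eq)
    qed
    then show "(\<lambda>z. z(m := d)) ` SS b m (s - d) \<subseteq> {y \<in> SS b (Suc m) s. y m = d}" by auto
  qed
  then show ?thesis using True by (simp add: bij_betw_same_card)
next
  case False
  have e: "{y \<in> SS b (Suc m) s. y m = d} = {}"
  proof -
    have "(\<Sum>i<Suc m. y i) \<ge> y m" for y :: "nat \<Rightarrow> nat" by simp
    then show ?thesis using False by (auto simp: SS_def)
  qed
  show ?thesis unfolding e using False by simp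
qed

lemma SS_Suc: "card (SS b (Suc m) s) = (\<Sum>d<b. if d \<le> s then card (SS b m (s - d)) else 0)"
proof -
  have eq: "SS b (Suc m) s = (\<Union>d<b. {y \<in> SS b (Suc m) s. y m = d})"
    by (auto simp: SS_def PiE_def Pi_def)
  have "card (SS b (Suc m) s) = card (\<Union>d<b. {y \<in> SS b (Suc m) s. y m = d})"
    by (rule arg_cong[OF eq])
  also have "\<dots> = (\<Sum>d<b. card {y \<in> SS b (Suc m) s. y m = d})"
    by (rule card_UN_disjoint) (auto simp: SS_finite)
  also have "\<dots> = (\<Sum>d<b. if d \<le> s then card (SS b m (s - d)) else 0)"
    by (rule sum.cong) (auto simp: SS_slice)
  finally show ?thesis .
qed

lemma PP_pow_nth: "(PP b ^ m :: 'a::comm_ring_1 fps) $ s = of_nat (card (SS b m s))"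
proof (induction m arbitrary: s)
  case 0
  have "SS b 0 s = (if s = 0 then {\<lambda>_. undefined} else {})"
    by (auto simp: SS_def)
  then show ?case by simp
next
  case (Suc m)
  show ?case unfolding PP_pow_Suc_nth by (simp add: Suc SS_Suc of_nat_sum if_distrib cong: if_cong)
qed

lemma div_char:
  assumes b: "b \<ge> (1::nat)"
  shows "(x div b = i) = (\<exists>d<b. x + d = b * i + (b - 1))"
proof
  assume "x div b = i"
  then have "x = b * i + x mod b" by (metis div_mult_mod_eq mult.commute)
  moreover have "x mod b < b" using b by simp
  ultimately show "\<exists>d<b. x + d = b * i + (b - 1)"
    by (intro exI[of _ "b - 1 - x mod b"]) auto
next
  assume "\<exists>d<b. x + d = b * i + (b - 1)"
  then obtain d where d: "d < b" "x + d = b * i + (b - 1)" by blast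
  then have "b * i \<le> x" "x < b * i + b" by linarith+
  then show "x div b = i" using b
    by (metis add.commute div_nat_eqI mult.commute mult_Suc_right)
qed

lemma carries_count:
  assumes b: "b \<ge> 1"
  shows "card {y \<in> PiE {..<m} (\<lambda>_. {..<b}). (j + (\<Sum>k<m. y k)) div b = i}
    = (if j \<le> b * i + (b - 1) then card (SS b (Suc m) (b * i + (b - 1) - j)) else 0)"
proof -
  define N where "N = b * i + (b - 1)"
  define A where "A = PiE {..<m} (\<lambda>_. {..<b::nat})"
  have finA: "finite A" unfolding A_def by (auto intro: finite_PiE)
  have eq: "{y \<in> A. (j + (\<Sum>k<m. y k)) div b = i} = (\<Union>d<b. {y \<in> A. j + (\<Sum>k<m. y k) + d = N})"
  proof (intro equalityI subsetI)
    fix y assume "y \<in> {y \<in> A. (j + (\<Sum>k<m. y k)) div b = i}"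
    then obtain d where "d < b" "j + (\<Sum>k<m. y k) + d = N" "y \<in> A"
      using div_char[OF b, of "j + (\<Sum>k<m. y k)" i] unfolding N_def by auto
    then show "y \<in> (\<Union>d<b. {y \<in> A. j + (\<Sum>k<m. y k) + d = N})" by blast
  next
    fix y assume "y \<in> (\<Union>d<b. {y \<in> A. j + (\<Sum>k<m. y k) + d = N})"
    then obtain d where "d < b" "j + (\<Sum>k<m. y k) + d = N" "y \<in> A" by blast
    then show "y \<in> {y \<in> A. (j + (\<Sum>k<m. y k)) div b = i}"
      using div_char[OF b, of "j + (\<Sum>k<m. y k)" i] unfolding N_def by auto
  qed
  have "card {y \<in> A. (j + (\<Sum>k<m. y k)) div b = i} = card (\<Union>d<b. {y \<in> A. j + (\<Sum>k<m. y k) + d = N})"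
    by (rule arg_cong[OF eq])
  also have "\<dots> = (\<Sum>d<b. card {y \<in> A. j + (\<Sum>k<m. y k) + d = N})"
    by (rule card_UN_disjoint) (auto simp: finA)
  also have "\<dots> = (\<Sum>d<b. if j + d \<le> N then card (SS b m (N - (j + d))) else 0)"
  proof (rule sum.cong)
    fix d
    show "card {y \<in> A. j + (\<Sum>k<m. y k) + d = N} = (if j + d \<le> N then card (SS b m (N - (j + d))) else 0)"
    proof (cases "j + d \<le> N")
      case True
      then have "{y \<in> A. j + (\<Sum>k<m. y k) + d = N} = SS b m (N - (j + d))"
        unfolding SS_def A_def by auto
      then show ?thesis using True by simp
    next
      case False
      then have "{y \<in> A. j + (\<Sum>k<m. y k) + d = N} = {}" by auto
      then show ?thesis using False by simp
    qed
  qed simp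
  also have "\<dots> = (if j \<le> N then card (SS b (Suc m) (N - j)) else 0)"
  proof (cases "j \<le> N")
    case True
    show ?thesis unfolding SS_Suc using True
      by (simp, intro sum.cong) (simp_all add: diff_diff_left)
  qed simp
  finally show ?thesis unfolding A_def N_def .
qed

theorem theorem2p1:
  fixes b n :: nat and h :: "complex poly"
  assumes "b \<ge> 1" and "n \<ge> 2" and "degree h \<le> n - 2"
  shows "\<forall>i. fps_nth ((1 - fps_X) ^ n * Phi b (fps_of_poly h * inverse ((1 - fps_X) ^ n))) i
           = of_nat b ^ (n - 1) * (\<Sum>j = 0..n - 2. complex_of_real (carries_K b (n - 1) j i) * coeff h j)"
proof
  fix i
  have b: "b \<ge> 1" using assms(1) .
  obtain m where n: "n = Suc m" using assms(2) by (cases n) auto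
  define F :: "complex fps" where "F = fps_of_poly h * inverse ((1 - fps_X) ^ n)"
  define P :: "complex fps" where "P = PP b"
  define N where "N = b * i + (b - 1)"
  have inv: "inverse ((1 - fps_X) ^ n) * (1 - fps_X) ^ n = (1 :: complex fps)"
    by (rule inverse_mult_eq_1) simp
  have X0: "(fps_X ^ b :: complex fps) $ 0 = 0" using b by simp
  have comp: "((1 - fps_X) ^ n) oo fps_X ^ b = (1 - fps_X ^ b :: complex fps) ^ n"
    by (simp add: fps_compose_power[OF X0, symmetric] fps_compose_sub_distrib X0 fps_X_fps_compose_startby0[OF X0])
  have "F * (1 - fps_X ^ b) ^ n = F * ((1 - fps_X) * P) ^ n"
    by (simp add: P_def PP_tele)
  also have "\<dots> = fps_of_poly h * (inverse ((1 - fps_X) ^ n) * (1 - fps_X) ^ n) * P ^ n"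
    by (simp only: F_def power_mult_distrib mult.assoc mult.commute mult.left_commute)
  also have "\<dots> = fps_of_poly h * P ^ n" by (simp add: inv)
  finally have FG: "F * (1 - fps_X ^ b) ^ n = fps_of_poly h * P ^ n" .
  have key: "Phi b (F * (1 - fps_X ^ b) ^ n) = Phi b F * (1 - fps_X) ^ n"
    by (rule phi_key[OF b]) (simp add: comp[symmetric] compose_Xpow_nth[OF b])
  define T where "T = (\<lambda>j. coeff h j * (if j \<le> N then (P ^ n) $ (N - j) else 0))"
  have "((1 - fps_X) ^ n * Phi b F) $ i = (fps_of_poly h * P ^ n) $ N"
  proof -
    have "(1 - fps_X) ^ n * Phi b F = Phi b (fps_of_poly h * P ^ n)"
      using key FG by (simp add: mult.commute)
    then show ?thesis by (simp add: Phi_def N_def)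
  qed
  also have "\<dots> = (\<Sum>k=0..N. coeff h k * (P ^ n) $ (N - k))"
    by (simp add: fps_mult_nth)
  also have "\<dots> = (\<Sum>k=0..N. T k)" by (simp add: T_def)
  also have "\<dots> = (\<Sum>k=0..N + n. T k)"
    by (rule sum.mono_neutral_left) (auto simp: T_def)
  also have "\<dots> = (\<Sum>k=0..n-2. T k)"
  proof (rule sum.mono_neutral_right)
    show "\<forall>k\<in>{0..N + n} - {0..n - 2}. T k = 0"
      using assms(3) by (auto simp: T_def coeff_eq_0)
  qed auto
  also have "\<dots> = of_nat b ^ (n - 1) * (\<Sum>j = 0..n - 2. complex_of_real (carries_K b (n - 1) j i) * coeff h j)"
    unfolding sum_distrib_left
  proof (rule sum.cong)
    fix j
    have bpos: "(real b) ^ m \<noteq> 0" using b by simp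
    have "of_nat b ^ (n - 1) * (complex_of_real (carries_K b (n - 1) j i) * coeff h j)
       = of_nat (card {y \<in> PiE {..<m} (\<lambda>_. {..<b}). (j + (\<Sum>k<m. y k)) div b = i}) * coeff h j"
      using bpos by (simp add: n carries_K_def of_real_divide)
    also have "\<dots> = T j"
      unfolding carries_count[OF b] T_def P_def PP_pow_nth n N_def by simp
    finally show "T j = of_nat b ^ (n - 1) * (complex_of_real (carries_K b (n - 1) j i) * coeff h j)" ..
  qed simp
  finally show "fps_nth ((1 - fps_X) ^ n * Phi b (fps_of_poly h * inverse ((1 - fps_X) ^ n))) i
           = of_nat b ^ (n - 1) * (\<Sum>j = 0..n - 2. complex_of_real (carries_K b (n - 1) j i) * coeff h j)"
    unfolding F_def .
qed

end
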